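(* Let $p\in[1,\infty)$. If $\lambda,\mu\in\mathcal M^+(\mathbb S^{N-1})$, $\nu\in\mathcal M^+(\mathbb R^N)$ and $\alpha\in[0,\infty)$ are such that $\mathcal G^{\mu,\nu}_p(u)=\mathcal G^{\lambda,\alpha\delta_0}_p(u)$ for every compactly supported Lipschitz function $u$ on $\mathbb R^N$, then $\nu=\beta\delta_0$ for some $\beta\in[0,\infty)$.
   Context: $\mathcal M^+(X)$ denotes finite non-negative Radon measures on $X$; $\delta_0$ is the Dirac mass at $0$. For Lipschitz compactly supported $u$ (more generally $u\in W^{1,p}$, or $BV$ if $p=1$), $\mathcal G^{\mu,\nu}_p(u)=\int_{\mathbb S^{N-1}}\|\sigma\cdot Du\|^p_{L^p}\,d\mu(\sigma)+\int_{\mathbb R^N\setminus\{0\}}\frac{\|u(\cdot+z)-u\|^p_{L^p}}{|z|^p}\,d\nu(z)$, where $\|\sigma\cdot Du\|^p_{L^p}=\int_{\mathbb R^N}|\sigma\cdot\nabla u(x)|^pdx$. *)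

theory Defs
  imports "HOL-Probability.Probability"
begin

text \<open>Directional derivative sigma . grad u(x); the gradient of a Lipschitz function
  exists a.e. (Rademacher); where u is not differentiable we set the value to 0
  (a Lebesgue-null set, irrelevant for the L^p integrals).\<close>
definition dir_grad :: "('a::euclidean_space \<Rightarrow> real) \<Rightarrow> 'a \<Rightarrow> 'a \<Rightarrow> real" where
  "dir_grad u \<sigma> x = (if u differentiable (at x) then frechet_derivative u (at x) \<sigma> else 0)"

definition G_fun :: "real \<Rightarrow> 'a::euclidean_space measure \<Rightarrow> 'a measure \<Rightarrow> ('a \<Rightarrow> real) \<Rightarrow> ennreal" where
  "G_fun p \<mu> \<nu> u =
     (\<integral>\<^sup>+ \<sigma>. (\<integral>\<^sup>+ x. ennreal (\<bar>dir_grad u \<sigma> x\<bar> powr p) \<partial>lborel) \<partial>\<mu>)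
   + (\<integral>\<^sup>+ z \<in> UNIV - {0}. (\<integral>\<^sup>+ x. ennreal (\<bar>u (x + z) - u x\<bar> powr p) \<partial>lborel)
                              / ennreal (norm z powr p) \<partial>\<nu>)"

definition dirac0 :: "'a::euclidean_space measure" where
  "dirac0 = return borel 0"

end

theory Submission
  imports Defs
begin

definition tent :: "real \<Rightarrow> 'a::euclidean_space \<Rightarrow> real" where
  "tent R x = max 0 (1 - norm x / R)"

definition gg :: "real \<Rightarrow> 'a::euclidean_space \<Rightarrow> 'a \<Rightarrow> real" where
  "gg R \<sigma> x = (if 0 < norm x \<and> norm x < R then - inner x \<sigma> / (R * norm x) else 0)"

lemma dir_grad_tent:
  fixes x :: "'a::euclidean_space"
  assumes R: "R > 0" and x: "x \<noteq> 0" "norm x \<noteq> R"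
  shows "dir_grad (tent R) \<sigma> x = gg R \<sigma> x"
proof (cases "norm x < R")
  case True
  have d: "((\<lambda>y. 1 - norm y / R) has_derivative (\<lambda>h. 0 - inner h (sgn x) / R)) (at x)"
    using has_derivative_norm[OF x(1)] R by (intro derivative_eq_intros) auto
  have d2: "(tent R has_derivative (\<lambda>h. 0 - inner h (sgn x) / R)) (at x)"
    apply (rule has_derivative_transform_within_open[OF d, of "{y. norm y < R}"])
    using True R by (auto simp: tent_def open_Collect_less continuous_on_norm_id)
  then have "tent R differentiable (at x)" by (auto simp: differentiable_def)
  then have "dir_grad (tent R) \<sigma> x = 0 - inner \<sigma> (sgn x) / R"
    unfolding dir_grad_def using frechet_derivative_at[OF d2] by metis
  also have "\<dots> = gg R \<sigma> x" using True x R
    by (simp add: gg_def sgn_div_norm inner_commute field_simps)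
  finally show ?thesis .
next
  case False
  then have F: "norm x > R" using x by auto
  have d: "((\<lambda>y. 0::real) has_derivative (\<lambda>h. 0)) (at x)" by simp
  have d2: "(tent R has_derivative (\<lambda>h. 0)) (at x)"
    apply (rule has_derivative_transform_within_open[OF d, of "{y. R < norm y}"])
    using F R by (auto simp: tent_def open_Collect_less continuous_on_norm_id)
  then have "tent R differentiable (at x)" by (auto simp: differentiable_def)
  then have "dir_grad (tent R) \<sigma> x = 0"
    unfolding dir_grad_def using frechet_derivative_at[OF d2] by metis
  then show ?thesis using F by (simp add: gg_def)
qed

lemma nn_integral_scaleR:
  fixes f :: "'a::euclidean_space \<Rightarrow> ennreal"
  assumes [measurable]: "f \<in> borel_measurable borel" and c: "c \<noteq> 0"
  shows "(\<integral>\<^sup>+x. f x \<partial>lborel) = ennreal (\<bar>c\<bar>^DIM('a)) * (\<integral>\<^sup>+x. f (c *\<^sub>R x) \<partial>lborel)"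
  by (subst lborel_affine[OF c, of 0])
     (simp add: nn_integral_density nn_integral_distr nn_integral_cmult)

lemma gg_meas[measurable]: "(\<lambda>(\<sigma>, y). gg R \<sigma> y) \<in> borel_measurable (borel \<Otimes>\<^sub>M borel)"
  unfolding gg_def by measurable

lemma gg_meas2[measurable]: "gg R \<sigma> \<in> borel_measurable borel"
  unfolding gg_def by measurable

lemma AE_good: "AE x in lborel. x \<noteq> (0::'a::euclidean_space) \<and> norm x \<noteq> R"
proof -
  have "sphere (0::'a) R \<in> null_sets lborel"
    using negligible_sphere[of "0::'a" R]
    by (auto simp: null_sets_completion_iff negligible_iff_null_sets negligible_convex_frontier)
  then have "AE x in lborel. x \<notin> sphere (0::'a) R" by (rule AE_not_in)
  then show ?thesis using AE_lborel_singleton[of "0::'a"] by eventually_elim auto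
qed

lemma gg_scale: "R > 0 \<Longrightarrow> gg R \<sigma> x = gg 1 \<sigma> ((1/R) *\<^sub>R x) / R"
  by (auto simp: gg_def field_simps)

lemma scale_integral:
  fixes h :: "'a::euclidean_space \<Rightarrow> ennreal"
  assumes [measurable]: "h \<in> borel_measurable borel" and R: "R > 0"
  shows "(\<integral>\<^sup>+x. h ((1/R) *\<^sub>R x) \<partial>lborel) = ennreal (R^DIM('a)) * (\<integral>\<^sup>+x. h x \<partial>lborel)"
proof -
  have "(\<integral>\<^sup>+x. h x \<partial>lborel) = ennreal (\<bar>1/R\<bar>^DIM('a)) * (\<integral>\<^sup>+x. h ((1/R) *\<^sub>R x) \<partial>lborel)"
    using R by (intro nn_integral_scaleR) auto
  then have "ennreal (R^DIM('a)) * (\<integral>\<^sup>+x. h x \<partial>lborel)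
     = (ennreal (R^DIM('a)) * ennreal (\<bar>1/R\<bar>^DIM('a))) * (\<integral>\<^sup>+x. h ((1/R) *\<^sub>R x) \<partial>lborel)"
    by (simp add: mult.assoc)
  also have "ennreal (R^DIM('a)) * ennreal (\<bar>1/R\<bar>^DIM('a)) = 1"
    using R by (simp add: ennreal_mult'[symmetric] power_mult_distrib[symmetric] ennreal_1[symmetric] del: ennreal_1)
  finally show ?thesis by simp
qed

definition KK :: "real \<Rightarrow> 'a::euclidean_space \<Rightarrow> ennreal" where
  "KK p \<sigma> = (\<integral>\<^sup>+y. ennreal (\<bar>gg 1 \<sigma> y\<bar> powr p) \<partial>lborel)"

lemma local_tent:
  fixes \<sigma> :: "'a::euclidean_space"
  assumes R: "R > 0"
  shows "(\<integral>\<^sup>+x. ennreal (\<bar>dir_grad (tent R) \<sigma> x\<bar> powr p) \<partial>lborel)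
       = ennreal (R^DIM('a) * R powr (-p)) * KK p \<sigma>"
proof -
  have "(\<integral>\<^sup>+x. ennreal (\<bar>dir_grad (tent R) \<sigma> x\<bar> powr p) \<partial>lborel)
      = (\<integral>\<^sup>+x. ennreal (R powr (-p)) * ennreal (\<bar>gg 1 \<sigma> ((1/R) *\<^sub>R x)\<bar> powr p) \<partial>lborel)"
  proof (rule nn_integral_cong_AE)
    show "AE x in lborel. ennreal (\<bar>dir_grad (tent R) \<sigma> x\<bar> powr p) =
         ennreal (R powr (-p)) * ennreal (\<bar>gg 1 \<sigma> ((1/R) *\<^sub>R x)\<bar> powr p)"
      using AE_good[of R]
    proof eventually_elim
      case (elim x)
      then have "dir_grad (tent R) \<sigma> x = gg 1 \<sigma> ((1/R) *\<^sub>R x) / R"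
        using dir_grad_tent[OF R, of x \<sigma>] gg_scale[OF R, of \<sigma> x] by simp
      then show ?case using R
        by (simp add: ennreal_mult'[symmetric] abs_divide powr_divide powr_minus_divide)
    qed
  qed
  also have "\<dots> = ennreal (R powr (-p)) * (\<integral>\<^sup>+x. ennreal (\<bar>gg 1 \<sigma> ((1/R) *\<^sub>R x)\<bar> powr p) \<partial>lborel)"
    by (rule nn_integral_cmult) measurable
  also have "(\<integral>\<^sup>+x. ennreal (\<bar>gg 1 \<sigma> ((1/R) *\<^sub>R x)\<bar> powr p) \<partial>lborel) = ennreal (R^DIM('a)) * KK p \<sigma>"
    unfolding KK_def by (rule scale_integral[OF _ R, where h="\<lambda>y. ennreal (\<bar>gg 1 \<sigma> y\<bar> powr p)"]) measurable
  finally show ?thesis using R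
    by (simp add: ennreal_mult'[symmetric] mult_ac)
qed

lemma tent_meas[measurable]: "tent R \<in> borel_measurable borel"
  unfolding tent_def by measurable

lemma tent_cont: "continuous_on UNIV (tent 1)"
  unfolding tent_def by (intro continuous_intros) auto

definition DD :: "real \<Rightarrow> 'a::euclidean_space \<Rightarrow> ennreal" where
  "DD p w = (\<integral>\<^sup>+x. ennreal (\<bar>tent 1 (x + w) - tent 1 x\<bar> powr p) \<partial>lborel)"

lemma DD_meas[measurable]: "DD p \<in> borel_measurable borel"
  unfolding DD_def by measurable

lemma tent_scale: assumes "R > 0" shows "tent R y = tent 1 ((1/R) *\<^sub>R y)"
proof -
  have "norm ((1/R) *\<^sub>R y) = norm y / R" using assms by simp
  then show ?thesis using assms by (simp add: tent_def abs_of_pos)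
qed

lemma nonlocal_tent:
  fixes z :: "'a::euclidean_space"
  assumes R: "R > 0"
  shows "(\<integral>\<^sup>+x. ennreal (\<bar>tent R (x + z) - tent R x\<bar> powr p) \<partial>lborel)
       = ennreal (R^DIM('a)) * DD p ((1/R) *\<^sub>R z)"
proof -
  have "(\<integral>\<^sup>+x. ennreal (\<bar>tent R (x + z) - tent R x\<bar> powr p) \<partial>lborel)
     = (\<integral>\<^sup>+x. ennreal (\<bar>tent 1 ((1/R) *\<^sub>R x + (1/R) *\<^sub>R z) - tent 1 ((1/R) *\<^sub>R x)\<bar> powr p) \<partial>lborel)"
    using R by (simp add: tent_scale[OF R] scaleR_add_right)
  also have "\<dots> = ennreal (R^DIM('a)) * DD p ((1/R) *\<^sub>R z)"
    unfolding DD_def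
    by (rule scale_integral[OF _ R, where h="\<lambda>y. ennreal (\<bar>tent 1 (y + (1/R) *\<^sub>R z) - tent 1 y\<bar> powr p)"]) measurable
  finally show ?thesis .
qed

lemma tent_bounds: "0 \<le> tent 1 x" "tent 1 x \<le> 1"
  by (auto simp: tent_def)

lemma tent_lip: "\<bar>tent 1 a - tent 1 b\<bar> \<le> norm (a - b)"
proof -
  have "\<bar>tent 1 a - tent 1 b\<bar> \<le> \<bar>norm a - norm b\<bar>" by (auto simp: tent_def)
  also have "\<dots> \<le> norm (a - b)" by (rule norm_triangle_ineq3)
  finally show ?thesis .
qed

lemma DD_bound:
  fixes w :: "'a::euclidean_space"
  assumes p: "p \<ge> 0"
  shows "DD p w \<le> ennreal (min 1 (norm w powr p) * (2 * unit_ball_vol DIM('a)))"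
proof -
  let ?m = "min 1 (norm w powr p)"
  have pt: "ennreal (\<bar>tent 1 (x + w) - tent 1 x\<bar> powr p)
     \<le> ennreal ?m * (indicator (ball 0 1) x + indicator (ball (-w) 1) x)" for x
  proof (cases "x \<in> ball 0 1 \<or> x \<in> ball (-w) 1")
    case True
    have d1: "\<bar>tent 1 (x + w) - tent 1 x\<bar> \<le> 1" using tent_bounds[of "x+w"] tent_bounds[of x] by auto
    have d2: "\<bar>tent 1 (x + w) - tent 1 x\<bar> \<le> norm w" using tent_lip[of "x+w" x] by simp
    have "\<bar>tent 1 (x + w) - tent 1 x\<bar> powr p \<le> (min 1 (norm w)) powr p"
      using d1 d2 p by (intro powr_mono2) auto
    also have "\<dots> = ?m"
    proof (cases "norm w \<le> 1")
      case True
      then show ?thesis using powr_le1[of p "norm w"] p by (simp add: min_def)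
    next
      case False
      then show ?thesis using ge_one_powr_ge_zero[of "norm w" p] p by (simp add: min_def)
    qed
    finally have "ennreal (\<bar>tent 1 (x + w) - tent 1 x\<bar> powr p) \<le> ennreal ?m" by simp
    also have "\<dots> \<le> ennreal ?m * (indicator (ball 0 1) x + indicator (ball (-w) 1) x)"
      using True mult_left_mono[of 1 2 "ennreal ?m"] by (auto simp: indicator_def)
    finally show ?thesis .
  next
    case False
    then have "tent 1 (x + w) = 0" "tent 1 x = 0"
      by (auto simp: tent_def dist_norm norm_minus_commute add.commute)
    then show ?thesis using p by simp
  qed
  have "DD p w \<le> (\<integral>\<^sup>+x. ennreal ?m * (indicator (ball 0 1) x + indicator (ball (-w) 1) x) \<partial>lborel)"
    unfolding DD_def by (rule nn_integral_mono) (rule pt)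
  also have "\<dots> = ennreal ?m * (emeasure lborel (ball (0::'a) 1) + emeasure lborel (ball (-w) 1))"
  proof -
    have [measurable]: "ball c r \<in> sets borel" for c :: 'a and r :: real by simp
    have "(\<integral>\<^sup>+x. indicator (ball 0 1) x + indicator (ball (-w) 1) x \<partial>lborel)
        = emeasure lborel (ball (0::'a) 1) + emeasure lborel (ball (-w) 1)"
      by (subst nn_integral_add) auto
    then show ?thesis by (subst nn_integral_cmult) auto
  qed
  also have "\<dots> = ennreal (?m * (2 * unit_ball_vol DIM('a)))"
    by (simp add: emeasure_ball ennreal_mult'[symmetric] ennreal_plus[symmetric] del: ennreal_plus)
  finally show ?thesis .
qed

lemma DD_pos:
  fixes w :: "'a::euclidean_space"
  assumes w: "w \<noteq> 0" and p: "p > 0"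
  shows "DD p w > 0"
proof -
  define d where "d x = \<bar>tent 1 (x + w) - tent 1 x\<bar>" for x :: 'a
  define a where "a = d 0"
  have a: "a > 0" using w by (auto simp: a_def d_def tent_def)
  have "continuous (at 0) d" unfolding d_def tent_def
    by (intro continuous_intros) auto
  then obtain r where r: "r > 0" "\<And>x. dist x 0 < r \<Longrightarrow> dist (d x) (d 0) < a/2"
    unfolding continuous_at_eps_delta using a by (metis half_gt_zero)
  have pt: "ennreal ((a/2) powr p) * indicator (ball 0 r) x \<le> ennreal (d x powr p)" for x
  proof (cases "x \<in> ball 0 r")
    case True
    then have "dist (d x) (d 0) < a/2" using r(2)[of x] by (auto simp: dist_norm)
    then have "d x \<ge> a/2" unfolding dist_real_def a_def by arith
    then have "(a/2) powr p \<le> d x powr p" using a p by (intro powr_mono2) auto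
    then show ?thesis using True by auto
  qed auto
  have [measurable]: "ball c r \<in> sets borel" for c :: 'a and r :: real by simp
  have "0 < ennreal ((a/2) powr p) * emeasure lborel (ball (0::'a) r)"
    using a r by (simp add: emeasure_ball ennreal_mult'[symmetric])
  also have "\<dots> = (\<integral>\<^sup>+x. ennreal ((a/2) powr p) * indicator (ball (0::'a) r) x \<partial>lborel)"
    by (subst nn_integral_cmult) (simp_all add: borel_measurable_indicator)
  also have "\<dots> \<le> DD p w" unfolding DD_def d_def[symmetric]
    by (rule nn_integral_mono) (rule pt)
  finally show ?thesis .
qed

lemma KK_meas[measurable]: "KK p \<in> borel_measurable borel"
  unfolding KK_def by measurable

lemma NL_meas[measurable]:
  "(\<lambda>z::'a::euclidean_space. ennreal (R^DIM('a)) * DD p ((1/R) *\<^sub>R z) / ennreal (norm z powr p) * indicator (UNIV-{0}) z)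
     \<in> borel_measurable borel"
  by measurable

lemma NL_rewrite:
  fixes M :: "'a::euclidean_space measure"
  assumes R: "R > 0"
  shows "(\<integral>\<^sup>+ z \<in> UNIV - {0}. (\<integral>\<^sup>+ x. ennreal (\<bar>tent R (x + z) - tent R x\<bar> powr p) \<partial>lborel)
                              / ennreal (norm z powr p) \<partial>M)
   = (\<integral>\<^sup>+z. ennreal (R^DIM('a)) * DD p ((1/R) *\<^sub>R z) / ennreal (norm z powr p) * indicator (UNIV-{0}) z \<partial>M)"
  by (intro nn_integral_cong) (simp add: nonlocal_tent[OF R])

lemma NL_dirac:
  fixes R :: real
  assumes R: "R > 0"
  shows "(\<integral>\<^sup>+ z \<in> UNIV - {0}. (\<integral>\<^sup>+ x. ennreal (\<bar>tent R (x + z) - tent R x\<bar> powr p) \<partial>lborel)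
                              / ennreal (norm z powr p) \<partial>(scale_measure (ennreal \<alpha>) (dirac0::'a::euclidean_space measure))) = 0"
  unfolding NL_rewrite[OF R] dirac0_def
  by (subst nn_integral_scale_measure) (auto simp: nn_integral_return)

lemma tent_lipschitz:
  assumes R: "R > 0"
  shows "(1/R)-lipschitz_on UNIV (tent R)"
proof (rule lipschitz_onI)
  fix x y :: 'a
  have "dist (tent R x) (tent R y) = \<bar>tent 1 ((1/R) *\<^sub>R x) - tent 1 ((1/R) *\<^sub>R y)\<bar>"
    by (simp add: tent_scale[OF R] dist_real_def)
  also have "\<dots> \<le> norm ((1/R) *\<^sub>R x - (1/R) *\<^sub>R y)" by (rule tent_lip)
  also have "\<dots> = (1/R) * dist x y" using R
    by (simp add: dist_norm scaleR_diff_right[symmetric])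
  finally show "dist (tent R x) (tent R y) \<le> (1/R) * dist x y" .
qed (use R in auto)

lemma tent_support:
  assumes R: "R > 0"
  shows "compact (closure {x::'a::euclidean_space. tent R x \<noteq> 0})"
proof -
  have "{x::'a. tent R x \<noteq> 0} \<subseteq> cball 0 R"
  proof
    fix x :: 'a assume "x \<in> {x. tent R x \<noteq> 0}"
    then have "max 0 (1 - norm x / R) \<noteq> 0" by (simp only: tent_def mem_Collect_eq not_False_eq_True)
    then have "1 - norm x / R > 0" using max.absorb1[of "1 - norm x / R" 0] by (metis not_le)
    then have "norm x / R < 1" by simp
    then show "x \<in> cball 0 R" using R by (simp add: divide_less_eq)
  qed
  then have "bounded {x::'a. tent R x \<noteq> 0}" using bounded_cball bounded_subset by blast
  then show ?thesis by simp
qed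

lemma KK_bound:
  fixes \<sigma> :: "'a::euclidean_space"
  assumes "norm \<sigma> = 1" "p \<ge> 0"
  shows "KK p \<sigma> \<le> emeasure lborel (ball (0::'a) 1)"
proof -
  have "ennreal (\<bar>gg 1 \<sigma> y\<bar> powr p) \<le> indicator (ball 0 1) y" for y
  proof (cases "0 < norm y \<and> norm y < 1")
    case True
    have "\<bar>inner y \<sigma>\<bar> \<le> norm y" using Cauchy_Schwarz_ineq2[of y \<sigma>] assms by simp
    then have "\<bar>gg 1 \<sigma> y\<bar> \<le> 1" using True by (simp add: gg_def abs_divide divide_le_eq_1)
    then have "\<bar>gg 1 \<sigma> y\<bar> powr p \<le> 1" using assms by (intro powr_le1) auto
    then show ?thesis using True by (simp add: indicator_def)
  next
    case False
    then have "gg 1 \<sigma> y = 0" by (simp only: gg_def if_False)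
    then show ?thesis by simp
  qed
  then have "KK p \<sigma> \<le> (\<integral>\<^sup>+y. indicator (ball (0::'a) 1) y \<partial>lborel)"
    unfolding KK_def by (intro nn_integral_mono) auto
  then show ?thesis by simp
qed

lemma H_lim:
  fixes \<nu> :: "'a::euclidean_space measure"
  assumes sets: "sets \<nu> = sets borel" and fin: "finite_measure \<nu>" and p: "p > 0"
  shows "(\<lambda>n. \<integral>\<^sup>+z. ennreal (min 1 ((1 / real (Suc n) / norm z) powr p)) \<partial>\<nu>) \<longlonglongrightarrow> 0"
proof -
  have [measurable_cong]: "sets \<nu> = sets borel" by (rule sets)
  define f where "f n z = ennreal (min 1 ((1 / real (Suc n) / norm z) powr p))" for n and z :: 'a
  have dec: "decseq f"
  proof (rule decseq_SucI, rule le_funI)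
    fix n and z :: 'a
    have "1 / real (Suc (Suc n)) / norm z \<le> 1 / real (Suc n) / norm z"
      by (intro divide_right_mono) (auto simp: field_simps)
    then have "(1 / real (Suc (Suc n)) / norm z) powr p \<le> (1 / real (Suc n) / norm z) powr p"
      using p by (intro powr_mono2) auto
    then show "f (Suc n) z \<le> f n z" unfolding f_def by (intro ennreal_leI) auto
  qed
  have fmeas[measurable]: "f n \<in> borel_measurable \<nu>" for n unfolding f_def by measurable
  have ffin: "(\<integral>\<^sup>+z. f n z \<partial>\<nu>) < \<infinity>" for n
  proof -
    have "(\<integral>\<^sup>+z. f n z \<partial>\<nu>) \<le> (\<integral>\<^sup>+z. 1 \<partial>\<nu>)"
      unfolding f_def by (intro nn_integral_mono) auto
    also have "\<dots> < \<infinity>" using finite_measure.emeasure_finite[OF fin, of "space \<nu>"]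
      by (simp add: top.not_eq_extremum)
    finally show ?thesis .
  qed
  have INF0: "(INF n. f n z) = 0" for z :: 'a
  proof -
    have "(\<lambda>n. 1 / real (Suc n) / norm z) \<longlonglongrightarrow> 0"
      using tendsto_divide[OF LIMSEQ_inverse_real_of_nat tendsto_const[of "norm z"]]
      by (cases "z = 0") (auto simp: inverse_eq_divide)
    then have "(\<lambda>n. (1 / real (Suc n) / norm z) powr p) \<longlonglongrightarrow> 0"
      using p by (intro tendsto_zero_powrI) auto
    then have "(\<lambda>n. min 1 ((1 / real (Suc n) / norm z) powr p)) \<longlonglongrightarrow> min 1 0"
      by (intro tendsto_min tendsto_const)
    then have "(\<lambda>n. f n z) \<longlonglongrightarrow> ennreal 0" unfolding f_def
      by (intro tendsto_ennrealI) simp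
    moreover have "(\<lambda>n. f n z) \<longlonglongrightarrow> (INF n. f n z)"
      by (rule LIMSEQ_INF, rule decseq_SucI) (use dec[THEN decseq_SucD] in \<open>auto simp: le_fun_def\<close>)
    ultimately show ?thesis using LIMSEQ_unique by fastforce
  qed
  have "(INF n. integral\<^sup>N \<nu> (f n)) = (\<integral>\<^sup>+z. (INF n. f n z) \<partial>\<nu>)"
    by (rule nn_integral_monotone_convergence_INF_decseq[symmetric]) (use dec ffin in auto)
  also have "\<dots> = 0" by (simp add: INF0)
  finally have "(INF n. integral\<^sup>N \<nu> (f n)) = 0" .
  moreover have "(\<lambda>n. integral\<^sup>N \<nu> (f n)) \<longlonglongrightarrow> (INF n. integral\<^sup>N \<nu> (f n))"
    by (rule LIMSEQ_INF, rule decseq_SucI, rule nn_integral_mono) (use dec[THEN decseq_SucD] in \<open>auto simp: le_fun_def\<close>)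
  ultimately show ?thesis unfolding f_def by simp
qed

lemma minlem: "(a::real) > 0 \<Longrightarrow> b > 0 \<Longrightarrow> min 1 (a/b) / a = (1/b) * min 1 (b/a)"
  by (cases "a \<le> b") (auto simp: min_def field_simps)

lemma pt_bound:
  fixes z :: "'a::euclidean_space"
  assumes R: "R > 0" and p: "p \<ge> 0" and z: "z \<noteq> 0"
  shows "ennreal (R^DIM('a)) * DD p ((1/R) *\<^sub>R z) / ennreal (norm z powr p)
     \<le> ennreal (R^DIM('a) * R powr (-p)) * (ennreal (2 * unit_ball_vol DIM('a)) * ennreal (min 1 ((R / norm z) powr p)))"
proof -
  let ?V = "2 * unit_ball_vol DIM('a)"
  have V: "?V \<ge> 0" by simp
  have "ennreal (R^DIM('a)) * DD p ((1/R) *\<^sub>R z) \<le> ennreal (R^DIM('a)) * ennreal (min 1 (norm ((1/R) *\<^sub>R z) powr p) * ?V)"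
    by (intro mult_left_mono DD_bound p) auto
  also have "\<dots> = ennreal (R^DIM('a) * (min 1 (norm ((1/R) *\<^sub>R z) powr p) * ?V))"
    using R by (simp add: ennreal_mult')
  finally have "ennreal (R^DIM('a)) * DD p ((1/R) *\<^sub>R z) / ennreal (norm z powr p)
      \<le> ennreal (R^DIM('a) * (min 1 (norm ((1/R) *\<^sub>R z) powr p) * ?V)) / ennreal (norm z powr p)"
    by (rule divide_right_mono_ennreal)
  also have "\<dots> = ennreal (R^DIM('a) * (min 1 (norm ((1/R) *\<^sub>R z) powr p) * ?V) / norm z powr p)"
    using z R by (intro divide_ennreal) auto
  also have "R^DIM('a) * (min 1 (norm ((1/R) *\<^sub>R z) powr p) * ?V) / norm z powr p
     = R^DIM('a) * R powr (-p) * (?V * min 1 ((R / norm z) powr p))"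
  proof -
    define a where "a = norm z powr p"
    define b where "b = R powr p"
    have a: "a > 0" using z by (simp add: a_def)
    have b: "b > 0" using R by (simp add: b_def)
    have e1: "norm ((1/R) *\<^sub>R z) powr p = a / b" using R by (simp add: powr_divide a_def b_def)
    have e2: "(R / norm z) powr p = b / a" using R by (simp add: powr_divide a_def b_def)
    have e3: "R powr (-p) = 1 / b" by (simp add: powr_minus_divide b_def)
    have "R^DIM('a) * (min 1 (a / b) * ?V) / a = R^DIM('a) * ?V * (min 1 (a/b) / a)"
      by simp
    also have "\<dots> = R^DIM('a) * ?V * ((1/b) * min 1 (b/a))" using minlem[OF a b] by simp
    also have "\<dots> = R^DIM('a) * (1/b) * (?V * min 1 (b/a))" by (simp add: mult_ac)
    finally show ?thesis unfolding e1 e2 e3 a_def[symmetric] .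
  qed
  also have "ennreal (R^DIM('a) * R powr (-p) * (?V * min 1 ((R / norm z) powr p)))
     = ennreal (R^DIM('a) * R powr (-p)) * (ennreal ?V * ennreal (min 1 ((R / norm z) powr p)))"
    using R by (simp add: ennreal_mult')
  finally show ?thesis .
qed

theorem lemma2p13:
  fixes p :: real and \<alpha> :: real
    and lam \<mu> \<nu> :: "'a::euclidean_space measure"
  assumes "1 \<le> p"
    and "sets lam = sets (restrict_space borel (sphere (0::'a) 1))" and "finite_measure lam"
    and "sets \<mu> = sets (restrict_space borel (sphere (0::'a) 1))" and "finite_measure \<mu>"
    and "sets \<nu> = sets (borel :: 'a measure)" and "finite_measure \<nu>"
    and "0 \<le> \<alpha>"
    and "\<And>u :: 'a \<Rightarrow> real. (\<exists>L. L-lipschitz_on UNIV u) \<Longrightarrow> compact (closure {x. u x \<noteq> 0}) \<Longrightarrow>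
           G_fun p \<mu> \<nu> u = G_fun p lam (scale_measure (ennreal \<alpha>) dirac0) u"
  shows "\<exists>\<beta>::real. 0 \<le> \<beta> \<and> \<nu> = scale_measure (ennreal \<beta>) dirac0"
proof -
  have p: "p > 0" "p \<ge> 0" using assms(1) by auto
  have KKm: "KK p \<in> borel_measurable M" if "sets M = sets (restrict_space borel (sphere (0::'a) 1))" for M
    by (simp add: measurable_cong_sets[OF that refl] measurable_restrict_space1)
  have KKmu[measurable]: "KK p \<in> borel_measurable \<mu>" by (rule KKm[OF assms(4)])
  have KKlam[measurable]: "KK p \<in> borel_measurable lam" by (rule KKm[OF assms(2)])
  have [measurable_cong]: "sets \<nu> = sets borel" by (rule assms(6))
  define Am where "Am = (\<integral>\<^sup>+\<sigma>. KK p \<sigma> \<partial>\<mu>)"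
  define Al where "Al = (\<integral>\<^sup>+\<sigma>. KK p \<sigma> \<partial>lam)"
  define c where "c R = ennreal (R^DIM('a) * R powr (-p))" for R :: real
  define NL where "NL R = (\<integral>\<^sup>+z. ennreal (R^DIM('a)) * DD p ((1/R) *\<^sub>R z) / ennreal (norm z powr p) * indicator (UNIV-{0}) z \<partial>\<nu>)" for R :: real
  define H where "H R = (\<integral>\<^sup>+z. ennreal (min 1 ((R / norm z) powr p)) \<partial>\<nu>)" for R :: real
  define V where "V = ennreal (2 * unit_ball_vol DIM('a))"
  have loc: "(\<integral>\<^sup>+\<sigma>. (\<integral>\<^sup>+x. ennreal (\<bar>dir_grad (tent R) \<sigma> x\<bar> powr p) \<partial>lborel) \<partial>M)
      = c R * (\<integral>\<^sup>+\<sigma>. KK p \<sigma> \<partial>M)" if "R > 0" "KK p \<in> borel_measurable M" for R and M :: "'a measure"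
    unfolding c_def local_tent[OF that(1)] using that(2) by (rule nn_integral_cmult)
  have eqR: "c R * Am + NL R = c R * Al" if R: "R > 0" for R
  proof -
    have "G_fun p \<mu> \<nu> (tent R) = G_fun p lam (scale_measure (ennreal \<alpha>) dirac0) (tent R)"
      using assms(9) tent_lipschitz[OF R] tent_support[OF R] by blast
    then show ?thesis
      unfolding G_fun_def NL_dirac[OF R] unfolding NL_rewrite[OF R] loc[OF R KKmu] loc[OF R KKlam] Am_def Al_def NL_def
      by simp
  qed
  have NLb: "NL R \<le> c R * (V * H R)" if R: "R > 0" for R
  proof -
    have "NL R \<le> (\<integral>\<^sup>+z. c R * (V * ennreal (min 1 ((R / norm z) powr p))) \<partial>\<nu>)"
      unfolding NL_def c_def V_def
    proof (rule nn_integral_mono)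
      fix z :: 'a
      show "ennreal (R^DIM('a)) * DD p ((1/R) *\<^sub>R z) / ennreal (norm z powr p) * indicator (UNIV-{0}) z
         \<le> ennreal (R^DIM('a) * R powr (-p)) * (ennreal (2 * unit_ball_vol DIM('a)) * ennreal (min 1 ((R / norm z) powr p)))"
        using pt_bound[OF R p(2), of z] by (cases "z = 0") auto
    qed
    also have "\<dots> = c R * (V * H R)" unfolding H_def
      by (subst nn_integral_cmult, measurable)+
    finally show ?thesis .
  qed
  have Alle: "Al \<le> Am + V * H R" if R: "R > 0" for R
  proof -
    have c0: "c R \<noteq> 0" "c R \<noteq> top" using R by (auto simp: c_def)
    have "c R * Al \<le> c R * (Am + V * H R)"
      unfolding eqR[OF R, symmetric] distrib_left using NLb[OF R] by (intro add_left_mono)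
    then show ?thesis using ennreal_mult_le_mult_iff[OF c0] by simp
  qed
  have lim: "(\<lambda>n. Am + V * H (1 / real (Suc n))) \<longlonglongrightarrow> Am + V * 0"
    unfolding H_def
    by (intro tendsto_add tendsto_const tendsto_mult_ennreal H_lim[OF assms(6,7) p(1)]) (auto simp: V_def)
  have AlAm: "Al \<le> Am"
    using LIMSEQ_le_const[OF lim] Alle by auto
  have spmu: "space \<mu> = sphere 0 1"
    using sets_eq_imp_space_eq[OF assms(4)] by (simp add: space_restrict_space)
  have Amfin: "Am \<noteq> \<infinity>"
  proof -
    have "Am \<le> (\<integral>\<^sup>+\<sigma>. emeasure lborel (ball (0::'a) 1) \<partial>\<mu>)"
      unfolding Am_def by (rule nn_integral_mono) (use KK_bound p(2) spmu in auto)
    also have "\<dots> = emeasure lborel (ball (0::'a) 1) * emeasure \<mu> (space \<mu>)" by simp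
    also have "\<dots> < \<infinity>"
    proof -
      have "emeasure lborel (ball (0::'a) 1) < \<infinity>" by (rule emeasure_lborel_ball_finite)
      moreover have "emeasure \<mu> (space \<mu>) < \<infinity>"
        using finite_measure.emeasure_finite[OF assms(5)] by (simp add: top.not_eq_extremum)
      ultimately show ?thesis by (simp add: ennreal_mult_less_top)
    qed
    finally show ?thesis by simp
  qed
  have c1: "c 1 = 1" by (simp add: c_def)
  have "Am + NL 1 \<le> Am + 0" using eqR[of 1] c1 AlAm by simp
  then have NL0: "NL 1 = 0" using Amfin by (simp add: ennreal_add_left_cancel_le)
  have NL1: "NL 1 = (\<integral>\<^sup>+z. DD p z / ennreal (norm z powr p) * indicator (UNIV-{0}) z \<partial>\<nu>)"
    unfolding NL_def by simp
  have fm: "(\<lambda>z. DD p z / ennreal (norm z powr p) * indicator (UNIV-{0}) z) \<in> borel_measurable \<nu>"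
    by measurable
  have "AE z in \<nu>. DD p z / ennreal (norm z powr p) * indicator (UNIV-{0}) z = 0"
    using NL0 NL1 nn_integral_0_iff_AE[OF fm] by simp
  then have AE0: "AE z in \<nu>. z = 0"
  proof eventually_elim
    case (elim z)
    show ?case
    proof (rule ccontr)
      assume z: "z \<noteq> 0"
      then have "DD p z / ennreal (norm z powr p) = 0" using elim by simp
      then show False using DD_pos[OF z p(1)] by simp
    qed
  qed
  have spnu: "space \<nu> = UNIV" using sets_eq_imp_space_eq[OF assms(6)] by simp
  have Usets: "UNIV - {0} \<in> sets \<nu>" using assms(6) by simp
  have null: "emeasure \<nu> (UNIV - {0}) = 0"
    using AE0 AE_iff_measurable[OF Usets, of "\<lambda>z. z = 0"] spnu by auto
  define \<beta> where "\<beta> = measure \<nu> {0}"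
  show ?thesis
  proof (intro exI conjI)
    show "0 \<le> \<beta>" by (simp add: \<beta>_def)
    show "\<nu> = scale_measure (ennreal \<beta>) dirac0"
    proof (rule measure_eqI)
      show "sets \<nu> = sets (scale_measure (ennreal \<beta>) dirac0)" using assms(6) by (simp add: dirac0_def)
      fix A assume A: "A \<in> sets \<nu>"
      have Ab: "A \<in> sets borel" using A assms(6) by simp
      have "emeasure \<nu> A = emeasure \<nu> (A \<inter> {0}) + emeasure \<nu> (A - {0})"
        using A assms(6) by (subst plus_emeasure) (auto intro: arg_cong[where f="emeasure \<nu>"])
      also have "emeasure \<nu> (A - {0}) = 0"
      proof -
        have "emeasure \<nu> (A - {0}) \<le> emeasure \<nu> (UNIV - {0})"
          by (rule emeasure_mono) (use Usets in auto)
        then show ?thesis using null by simp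
      qed
      also have "emeasure \<nu> (A \<inter> {0}) = ennreal \<beta> * indicator A 0"
      proof (cases "0 \<in> A")
        case True
        then have "A \<inter> {0} = {0}" by auto
        then show ?thesis using True finite_measure.emeasure_eq_measure[OF assms(7), of "{0}"]
          by (simp add: \<beta>_def)
      next
        case False
        then have "A \<inter> {0} = {}" by auto
        then show ?thesis using False by simp
      qed
      finally show "emeasure \<nu> A = emeasure (scale_measure (ennreal \<beta>) dirac0) A"
        using Ab by (simp add: dirac0_def)
    qed
  qed
qed

end
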